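(* Let $\mathbb{T}$ be a time scale, $\alpha\in(0,1]$, $m\ge 2$ an integer, and $t\in\mathbb{T}^k$. Let $f_1,\dots,f_m:\mathbb{T}\to\mathbb{R}$ each be continuous on $\mathbb{T}^k$ and nabla fractional differentiable of order $\alpha$ at $t$. Then $\prod_{i=1}^m f_i$ is nabla fractional differentiable of order $\alpha$ at $t$ and $$\nabla^{(\alpha)}\Big(\prod_{i=1}^m f_i\Big)(t)=\sum_{i=1}^m\Big(\prod_{1\le j\le i-1}f_j(\rho(t))\cdot\nabla^{(\alpha)}f_i(t)\cdot\prod_{i+1\le j\le m}f_j(t)\Big),$$ with empty products equal to $1$.
   Context: A time scale $\mathbb{T}$ is a nonempty closed subset of $\mathbb{R}$ with the relative topology. For $t\in\mathbb{T}$: $\rho(t)=\sup\{s\in\mathbb{T}:s<t\}$, $\sigma(t)=\inf\{s\in\mathbb{T}:s>t\}$. If $\mathbb{T}$ has a minimum $m_0$ with $\sigma(m_0)>m_0$ then $\mathbb{T}^k=\mathbb{T}\setminus\{m_0\}$, else $\mathbb{T}^k=\mathbb{T}$. $U_\delta(t)=(t-\delta,t+\delta)\cap\mathbb{T}$, $U^-_\delta(t)=(t-\delta,t)\cap\mathbb{T}$. Let $Q=\{1/q: q \text{ an odd positive integer}\}$; for $\alpha\in Q$, $x^\alpha$ is the real $q$-th root. Definition: $h:\mathbb{T}\to\mathbb{R}$ is nabla fractional differentiable of order $\alpha$ at $t\in\mathbb{T}^k$ if there is $L\in\mathbb{R}$ such that for every $\varepsilon>0$ there is $\delta>0$ with $|[h(\rho(t))-h(s)]-L[\rho(t)-s]^\alpha|\le\varepsilon|\rho(t)-s|^\alpha$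 for all $s\in U_\delta(t)$ if $\alpha\in Q$, resp. all $s\in U^-_\delta(t)$ if $\alpha\notin Q$; then $\nabla^{(\alpha)}h(t):=L$. *)

theory Defs
  imports "HOL-Analysis.Analysis"
begin

definition time_scale :: "real set \<Rightarrow> bool" where
  "time_scale T \<longleftrightarrow> T \<noteq> {} \<and> closed T"

definition rho :: "real set \<Rightarrow> real \<Rightarrow> real" where
  "rho T t = (if {s\<in>T. s < t} = {} then t else Sup {s\<in>T. s < t})"

definition sigma :: "real set \<Rightarrow> real \<Rightarrow> real" where
  "sigma T t = (if {s\<in>T. s > t} = {} then t else Inf {s\<in>T. s > t})"

definition Tk :: "real set \<Rightarrow> real set" where
  "Tk T = (if (\<exists>m0\<in>T. (\<forall>s\<in>T. m0 \<le> s) \<and> sigma T m0 > m0)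
           then T - {THE m0. m0 \<in> T \<and> (\<forall>s\<in>T. m0 \<le> s)} else T)"

definition Qodd :: "real set" where
  "Qodd = {1 / real q | q::nat. odd q}"

text \<open>x^alpha: for alpha = 1/q (q odd) the real q-th root, otherwise the usual power.\<close>
definition fpow :: "real \<Rightarrow> real \<Rightarrow> real" where
  "fpow \<alpha> x = (if \<alpha> \<in> Qodd then sgn x * \<bar>x\<bar> powr \<alpha> else x powr \<alpha>)"

definition nabla_frac_has_deriv ::
  "real set \<Rightarrow> real \<Rightarrow> (real \<Rightarrow> real) \<Rightarrow> real \<Rightarrow> real \<Rightarrow> bool" where
  "nabla_frac_has_deriv T \<alpha> h t L \<longleftrightarrow> t \<in> Tk T \<and>
     (\<forall>\<epsilon>>0. \<exists>\<delta>>0. \<forall>s\<in>T.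
        (if \<alpha> \<in> Qodd then t - \<delta> < s \<and> s < t + \<delta> else t - \<delta> < s \<and> s < t) \<longrightarrow>
        \<bar>(h (rho T t) - h s) - L * fpow \<alpha> (rho T t - s)\<bar> \<le> \<epsilon> * \<bar>rho T t - s\<bar> powr \<alpha>)"

end

theory Submission
  imports Defs
begin

lemma le_rho:
  assumes "s \<in> T" "s < t"
  shows "s \<le> rho T t"
proof -
  have ne: "{s\<in>T. s < t} \<noteq> {}" using assms by blast
  have "bdd_above {s\<in>T. s < t}" by (rule bdd_aboveI[of _ t]) auto
  then have "s \<le> Sup {s\<in>T. s < t}" using assms by (intro cSup_upper) auto
  then show ?thesis using ne unfolding rho_def by auto
qed

lemma fpow_bound:
  assumes "s \<in> T" "\<alpha> \<in> Qodd \<or> s < t"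
  shows "\<bar>fpow \<alpha> (rho T t - s)\<bar> \<le> \<bar>rho T t - s\<bar> powr \<alpha>"
proof (cases "\<alpha> \<in> Qodd")
  case True
  then show ?thesis by (simp add: fpow_def abs_mult sgn_if)
next
  case False
  then have "s < t" using assms by auto
  then have "0 \<le> rho T t - s" using le_rho[OF assms(1)] by simp
  then show ?thesis using False by (simp add: fpow_def)
qed

lemma prod_rule:
  assumes f: "nabla_frac_has_deriv T \<alpha> f t Lf"
    and g: "nabla_frac_has_deriv T \<alpha> g t Lg"
    and c: "continuous (at t within T) g"
  shows "nabla_frac_has_deriv T \<alpha> (\<lambda>s. f s * g s) t (Lf * g t + f (rho T t) * Lg)"
  unfolding nabla_frac_has_deriv_def
proof (intro conjI allI impI)
  show "t \<in> Tk T" using f by (simp add: nabla_frac_has_deriv_def)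
  fix \<epsilon> :: real assume ep: "\<epsilon> > 0"
  define r where "r = rho T t"
  define e1 where "e1 = \<epsilon> / (3 * (\<bar>f r\<bar> + 1))"
  define e2 where "e2 = \<epsilon> / (3 * (\<bar>g t\<bar> + 1))"
  define e3 where "e3 = min 1 (\<epsilon> / (3 * (\<bar>Lf\<bar> + 1)))"
  have e1: "e1 > 0" using ep by (simp add: e1_def add_pos_nonneg)
  have e2: "e2 > 0" using ep by (simp add: e2_def add_pos_nonneg)
  have e3: "e3 > 0" using ep by (simp add: e3_def add_pos_nonneg)
  obtain d1 where d1: "d1 > 0" and D1: "\<forall>s\<in>T.
        (if \<alpha> \<in> Qodd then t - d1 < s \<and> s < t + d1 else t - d1 < s \<and> s < t) \<longrightarrow>
        \<bar>(g r - g s) - Lg * fpow \<alpha> (r - s)\<bar> \<le> e1 * \<bar>r - s\<bar> powr \<alpha>"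
    using g e1 unfolding nabla_frac_has_deriv_def r_def by blast
  obtain d2 where d2: "d2 > 0" and D2: "\<forall>s\<in>T.
        (if \<alpha> \<in> Qodd then t - d2 < s \<and> s < t + d2 else t - d2 < s \<and> s < t) \<longrightarrow>
        \<bar>(f r - f s) - Lf * fpow \<alpha> (r - s)\<bar> \<le> e2 * \<bar>r - s\<bar> powr \<alpha>"
    using f e2 unfolding nabla_frac_has_deriv_def r_def by blast
  obtain d3 where d3: "d3 > 0" and D3: "\<forall>s\<in>T. dist s t < d3 \<longrightarrow> dist (g s) (g t) < e3"
    using c e3 unfolding continuous_within_eps_delta by blast
  define d where "d = min d1 (min d2 d3)"
  show "\<exists>\<delta>>0. \<forall>s\<in>T.
        (if \<alpha> \<in> Qodd then t - \<delta> < s \<and> s < t + \<delta> else t - \<delta> < s \<and> s < t) \<longrightarrow>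
        \<bar>(f (rho T t) * g (rho T t) - f s * g s) - (Lf * g t + f (rho T t) * Lg) * fpow \<alpha> (rho T t - s)\<bar>
        \<le> \<epsilon> * \<bar>rho T t - s\<bar> powr \<alpha>"
  proof (intro exI[of _ d] conjI ballI impI)
    show "d > 0" using d1 d2 d3 by (simp add: d_def)
    fix s assume sT: "s \<in> T" and reg: "(if \<alpha> \<in> Qodd then t - d < s \<and> s < t + d else t - d < s \<and> s < t)"
    have r1: "(if \<alpha> \<in> Qodd then t - d1 < s \<and> s < t + d1 else t - d1 < s \<and> s < t)"
      using reg by (auto simp: d_def split: if_splits)
    have r2: "(if \<alpha> \<in> Qodd then t - d2 < s \<and> s < t + d2 else t - d2 < s \<and> s < t)"
      using reg by (auto simp: d_def split: if_splits)
    have r3: "dist s t < d3" using reg by (auto simp: d_def dist_real_def split: if_splits)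
    have or: "\<alpha> \<in> Qodd \<or> s < t" using reg by (auto split: if_splits)
    define p where "p = fpow \<alpha> (r - s)"
    define w where "w = \<bar>r - s\<bar> powr \<alpha>"
    have pw: "\<bar>p\<bar> \<le> w" using fpow_bound[OF sT or] by (simp add: p_def w_def r_def)
    have w0: "w \<ge> 0" by (simp add: w_def)
    have A: "\<bar>(g r - g s) - Lg * p\<bar> \<le> e1 * w" using D1 sT r1 by (simp add: p_def w_def)
    have B: "\<bar>(f r - f s) - Lf * p\<bar> \<le> e2 * w" using D2 sT r2 by (simp add: p_def w_def)
    have C: "\<bar>g s - g t\<bar> < e3" using D3 sT r3 by (simp add: dist_real_def)
    have gs: "\<bar>g s\<bar> \<le> \<bar>g t\<bar> + 1" using C e3_def by linarith
    have eq: "(f r * g r - f s * g s) - (Lf * g t + f r * Lg) * p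
       = f r * ((g r - g s) - Lg * p) + g s * ((f r - f s) - Lf * p) + (g s - g t) * Lf * p"
      by (simp add: algebra_simps)
    have t1: "\<bar>f r * ((g r - g s) - Lg * p)\<bar> \<le> \<epsilon> / 3 * w"
    proof -
      have "\<bar>f r * ((g r - g s) - Lg * p)\<bar> \<le> (\<bar>f r\<bar> + 1) * (e1 * w)"
        unfolding abs_mult by (rule mult_mono) (use A in auto)
      also have "\<dots> = \<epsilon> / 3 * w" by (simp add: e1_def field_simps add_pos_nonneg)
      finally show ?thesis .
    qed
    have t2: "\<bar>g s * ((f r - f s) - Lf * p)\<bar> \<le> \<epsilon> / 3 * w"
    proof -
      have "\<bar>g s * ((f r - f s) - Lf * p)\<bar> \<le> (\<bar>g t\<bar> + 1) * (e2 * w)"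
        unfolding abs_mult by (rule mult_mono) (use B gs in auto)
      also have "\<dots> = \<epsilon> / 3 * w" by (simp add: e2_def field_simps add_pos_nonneg)
      finally show ?thesis .
    qed
    have t3: "\<bar>(g s - g t) * Lf * p\<bar> \<le> \<epsilon> / 3 * w"
    proof -
      have c3: "\<bar>g s - g t\<bar> \<le> \<epsilon> / (3 * (\<bar>Lf\<bar> + 1))" using C e3_def by linarith
      have "\<bar>(g s - g t) * Lf * p\<bar> = \<bar>g s - g t\<bar> * (\<bar>Lf\<bar> * \<bar>p\<bar>)" by (simp add: abs_mult)
      also have "\<dots> \<le> (\<epsilon> / (3 * (\<bar>Lf\<bar> + 1))) * ((\<bar>Lf\<bar> + 1) * w)"
        by (rule mult_mono) (use c3 pw w0 in \<open>auto intro: mult_mono\<close>)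
      also have "\<dots> = \<epsilon> / 3 * w" by (simp add: field_simps add_pos_nonneg)
      finally show ?thesis .
    qed
    have "\<bar>(f r * g r - f s * g s) - (Lf * g t + f r * Lg) * p\<bar> \<le> \<epsilon> * w"
      unfolding eq using t1 t2 t3 by linarith
    then show "\<bar>(f (rho T t) * g (rho T t) - f s * g s) - (Lf * g t + f (rho T t) * Lg) * fpow \<alpha> (rho T t - s)\<bar>
        \<le> \<epsilon> * \<bar>rho T t - s\<bar> powr \<alpha>" by (simp add: r_def p_def w_def)
  qed
qed

lemma const_one:
  assumes "t \<in> Tk T"
  shows "nabla_frac_has_deriv T \<alpha> (\<lambda>s. 1) t 0"
  using assms unfolding nabla_frac_has_deriv_def by (auto intro!: exI[of _ 1])

lemma prod_gen:
  fixes n :: nat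
  assumes "t \<in> Tk T"
    and "\<And>i. i \<in> {1..n} \<Longrightarrow> continuous (at t within T) (f i)"
    and "\<And>i. i \<in> {1..n} \<Longrightarrow> nabla_frac_has_deriv T \<alpha> (f i) t (L i)"
  shows "nabla_frac_has_deriv T \<alpha> (\<lambda>s. \<Prod>i=1..n. f i s) t
           (\<Sum>i=1..n. (\<Prod>j=1..<i. f j (rho T t)) * L i * (\<Prod>j=i+1..n. f j t))"
  using assms(2,3)
proof (induction n)
  case 0
  then show ?case using const_one[OF assms(1)] by simp
next
  case (Suc n)
  have IH: "nabla_frac_has_deriv T \<alpha> (\<lambda>s. \<Prod>i=1..n. f i s) t
           (\<Sum>i=1..n. (\<Prod>j=1..<i. f j (rho T t)) * L i * (\<Prod>j=i+1..n. f j t))"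
    using Suc by auto
  have P: "nabla_frac_has_deriv T \<alpha> (\<lambda>s. (\<Prod>i=1..n. f i s) * f (Suc n) s) t
     ((\<Sum>i=1..n. (\<Prod>j=1..<i. f j (rho T t)) * L i * (\<Prod>j=i+1..n. f j t)) * f (Suc n) t
      + (\<Prod>i=1..n. f i (rho T t)) * L (Suc n))"
    by (rule prod_rule[OF IH]) (use Suc.prems in auto)
  have fe: "(\<lambda>s. \<Prod>i=1..Suc n. f i s) = (\<lambda>s. (\<Prod>i=1..n. f i s) * f (Suc n) s)"
    by (simp add: prod.nat_ivl_Suc')
  have S: "(\<Sum>i=1..n. (\<Prod>j=1..<i. f j (rho T t)) * L i * (\<Prod>j=i+1..Suc n. f j t))
     = (\<Sum>i=1..n. (\<Prod>j=1..<i. f j (rho T t)) * L i * (\<Prod>j=i+1..n. f j t)) * f (Suc n) t"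
    unfolding sum_distrib_right
  proof (rule sum.cong[OF refl])
    fix i assume "i \<in> {1..n}"
    then have "(\<Prod>j=i+1..Suc n. f j t) = (\<Prod>j=i+1..n. f j t) * f (Suc n) t"
      by (subst prod.nat_ivl_Suc') auto
    then show "(\<Prod>j=1..<i. f j (rho T t)) * L i * (\<Prod>j=i+1..Suc n. f j t)
      = (\<Prod>j=1..<i. f j (rho T t)) * L i * (\<Prod>j=i+1..n. f j t) * f (Suc n) t" by simp
  qed
  have "(\<Sum>i=1..Suc n. (\<Prod>j=1..<i. f j (rho T t)) * L i * (\<Prod>j=i+1..Suc n. f j t))
    = (\<Sum>i=1..n. (\<Prod>j=1..<i. f j (rho T t)) * L i * (\<Prod>j=i+1..n. f j t)) * f (Suc n) t
      + (\<Prod>i=1..n. f i (rho T t)) * L (Suc n)"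
    apply (subst sum.nat_ivl_Suc')
     apply simp
    apply (subst S)
    apply (simp add: atLeastLessThanSuc_atLeastAtMost)
    done
  then show ?case using P fe by simp
qed

theorem mainTheorem10:
  fixes T :: "real set" and \<alpha> :: real and m :: nat and t :: real
    and f :: "nat \<Rightarrow> real \<Rightarrow> real" and L :: "nat \<Rightarrow> real"
  assumes "time_scale T"
    and "0 < \<alpha>" and "\<alpha> \<le> 1"
    and "m \<ge> 2"
    and "t \<in> Tk T"
    and "\<And>i x. i \<in> {1..m} \<Longrightarrow> x \<in> Tk T \<Longrightarrow> continuous (at x within T) (f i)"
    and "\<And>i. i \<in> {1..m} \<Longrightarrow> nabla_frac_has_deriv T \<alpha> (f i) t (L i)"
  shows "nabla_frac_has_deriv T \<alpha> (\<lambda>s. \<Prod>i=1..m. f i s) t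
           (\<Sum>i=1..m. (\<Prod>j=1..<i. f j (rho T t)) * L i * (\<Prod>j=i+1..m. f j t))"
  by (rule prod_gen) (use assms in auto)

end
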